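(* For every $\alpha>0$, the Alexander operator $C_0(f)(z)=\int_0^z\frac{f(w)}{w}\,dw$ is a bounded linear operator from $(\mathcal{B}_\alpha^0,\|\cdot\|_{\mathcal{B}_\alpha})$ to itself, and its operator norm equals $1$.
   Context: $\mathbb{D}=\{z\in\mathbb{C}:|z|<1\}$. For $\alpha>0$, the $\alpha$-Bloch space $\mathcal{B}_\alpha$ is the space of analytic functions $f$ on $\mathbb{D}$ with $\|f\|_{\mathcal{B}_\alpha}:=\sup_{z\in\mathbb{D}}(1-|z|^2)^\alpha|f'(z)|<\infty$. $\mathcal{B}_\alpha^0=\{f\in\mathcal{B}_\alpha: f(0)=0\}$, normed by $\|\cdot\|_{\mathcal{B}_\alpha}$. *)

theory Defs
  imports "HOL-Complex_Analysis.Complex_Analysis"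
begin

definition bloch_weight :: "real \<Rightarrow> (complex \<Rightarrow> complex) \<Rightarrow> complex \<Rightarrow> real" where
  "bloch_weight \<alpha> f z = (1 - (cmod z)\<^sup>2) powr \<alpha> * cmod (deriv f z)"

text \<open>The alpha-Bloch space (functions analytic on the unit disc; values outside are irrelevant).\<close>
definition bloch_space :: "real \<Rightarrow> (complex \<Rightarrow> complex) set" where
  "bloch_space \<alpha> = {f. f holomorphic_on ball 0 1 \<and> bdd_above (bloch_weight \<alpha> f ` ball 0 1)}"

definition bloch_norm :: "real \<Rightarrow> (complex \<Rightarrow> complex) \<Rightarrow> real" where
  "bloch_norm \<alpha> f = (SUP z\<in>ball 0 1. bloch_weight \<alpha> f z)"

definition bloch_space0 :: "real \<Rightarrow> (complex \<Rightarrow> complex) set" where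
  "bloch_space0 \<alpha> = {f \<in> bloch_space \<alpha>. f 0 = 0}"

definition alexander_op :: "(complex \<Rightarrow> complex) \<Rightarrow> complex \<Rightarrow> complex" where
  "alexander_op f z = contour_integral (linepath 0 z) (\<lambda>w. f w / w)"

end

theory Submission
  imports Defs
begin

definition Gf :: "(complex \<Rightarrow> complex) \<Rightarrow> complex \<Rightarrow> complex" where
  "Gf f = (\<lambda>w. if w = 0 then deriv f 0 else f w / w)"

lemma G_hol:
  assumes "f holomorphic_on ball 0 1" "f 0 = 0"
  shows "Gf f holomorphic_on ball 0 1"
proof -
  have "(\<lambda>z. if z = 0 then deriv f 0 else (f z - f 0) / (z - 0)) holomorphic_on ball 0 1"
    by (rule pole_lemma[OF assms(1)]) simp
  moreover have "(\<lambda>z. if z = 0 then deriv f 0 else (f z - f 0) / (z - 0)) = Gf f"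
    by (rule ext) (simp add: Gf_def assms(2))
  ultimately show ?thesis by simp
qed

lemma prim:
  assumes hol: "h holomorphic_on ball 0 1" and x: "x \<in> ball (0::complex) 1"
  shows "((\<lambda>x. contour_integral (linepath 0 x) h) has_field_derivative h x) (at x)"
proof (rule triangle_contour_integrals_starlike_primitive[where S="ball 0 1"])
  show "continuous_on (ball 0 1) h" using hol holomorphic_on_imp_continuous_on by blast
  show "(0::complex) \<in> ball 0 1" by simp
  show "open (ball (0::complex) 1)" by simp
  show "x \<in> ball 0 1" by fact
  show "closed_segment 0 y \<subseteq> ball 0 1" if "y \<in> ball 0 1" for y :: complex
    using that by (intro closed_segment_subset) (auto simp: convex_ball)
  fix b c assume bc: "closed_segment b c \<subseteq> ball (0::complex) 1"
  then have "b \<in> ball 0 1" "c \<in> ball 0 1" by auto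
  then have "(h has_contour_integral 0) (linepath 0 b +++ linepath b c +++ linepath c 0)"
    by (intro Cauchy_theorem_convex_simple[OF hol]) 
       (auto simp: valid_path_join path_image_join closed_segment_subset bc)
  then show "contour_integral (linepath 0 b) h + contour_integral (linepath b c) h +
                       contour_integral (linepath c 0) h = 0"
    by (rule has_chain_integral_chain_integral3)
qed

lemma C0_eq:
  assumes "f holomorphic_on ball 0 1" "f 0 = 0"
  shows "alexander_op f z = contour_integral (linepath 0 z) (Gf f)"
proof (cases "z = 0")
  case True then show ?thesis by (simp add: alexander_op_def)
next
  case False
  show ?thesis unfolding alexander_op_def
    by (rule contour_integral_spike_finite_simple_path[of "{0}"])
       (use False in \<open>auto simp: Gf_def simple_path_linepath\<close>)
qed

lemma C0_deriv:
  assumes "f holomorphic_on ball 0 1" "f 0 = 0" "x \<in> ball 0 1"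
  shows "(alexander_op f has_field_derivative Gf f x) (at x)"
proof -
  have "((\<lambda>x. contour_integral (linepath 0 x) (Gf f)) has_field_derivative Gf f x) (at x)"
    by (rule prim[OF G_hol[OF assms(1,2)] assms(3)])
  then show ?thesis
    by (rule has_field_derivative_transform_within_open[where S="ball 0 1"])
       (use assms C0_eq in auto)
qed

lemma weight_le_norm:
  assumes "f \<in> bloch_space \<alpha>" "w \<in> ball 0 1"
  shows "bloch_weight \<alpha> f w \<le> bloch_norm \<alpha> f"
  using assms unfolding bloch_space_def bloch_norm_def by (auto intro: cSUP_upper)

lemma bound:
  assumes f: "f \<in> bloch_space \<alpha>" "f 0 = 0" and z: "z \<in> ball 0 1" and a: "\<alpha> > 0"
  shows "bloch_weight \<alpha> (alexander_op f) z \<le> bloch_norm \<alpha> f"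
proof -
  have hol: "f holomorphic_on ball 0 1" using f unfolding bloch_space_def by auto
  have dC: "deriv (alexander_op f) z = Gf f z"
    using C0_deriv[OF hol f(2) z] DERIV_imp_deriv by blast
  define N where "N = bloch_norm \<alpha> f"
  have wN: "bloch_weight \<alpha> f w \<le> N" if "w \<in> ball 0 1" for w
    using weight_le_norm[OF f(1) that] N_def by simp
  show ?thesis
  proof (cases "z = 0")
    case True
    then show ?thesis using wN[of 0] dC by (simp add: bloch_weight_def Gf_def N_def)
  next
    case False
    define r where "r = cmod z"
    have r: "0 < r" "r < 1" using False z by (auto simp: r_def)
    have q: "0 < 1 - r\<^sup>2" using r by (simp add: power_strict_mono abs_square_less_1)
    define B where "B = N / (1 - r\<^sup>2) powr \<alpha>"
    have qp: "0 < (1 - r\<^sup>2) powr \<alpha>" using q by simp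
    have segball: "closed_segment 0 z \<subseteq> ball 0 1" using z by (intro closed_segment_subset) (auto simp: convex_ball)
    have dB: "cmod (deriv f w) \<le> B" if w: "w \<in> closed_segment 0 z" for w
    proof -
      have wb: "w \<in> ball 0 1" using w segball by auto
      have "cmod w \<le> r" using w unfolding r_def
        by (metis dist_0_norm segment_bound1 norm_minus_commute diff_0 norm_minus_cancel
              closed_segment_commute)
      then have "r\<^sup>2 \<ge> (cmod w)\<^sup>2" by (simp add: power_mono)
      then have "(1 - r\<^sup>2) powr \<alpha> \<le> (1 - (cmod w)\<^sup>2) powr \<alpha>"
        using q a by (intro powr_mono2) auto
      then have "(1 - r\<^sup>2) powr \<alpha> * cmod (deriv f w) \<le> N"
        using wN[OF wb] unfolding bloch_weight_def
        by (meson mult_right_mono norm_ge_zero order_trans)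
      then show ?thesis unfolding B_def using qp by (simp add: field_simps)
    qed
    have "cmod (f z - f 0) \<le> B * cmod (z - 0)"
    proof (rule field_differentiable_bound[where S="closed_segment 0 z" and f'="deriv f"])
      show "convex (closed_segment 0 z)" by simp
      show "(f has_field_derivative deriv f w) (at w within closed_segment 0 z)"
        if "w \<in> closed_segment 0 z" for w
      proof -
        have "w \<in> ball 0 1" using that segball by auto
        then have "f field_differentiable at w"
          using hol holomorphic_on_imp_differentiable_at by auto
        then show ?thesis
          using DERIV_deriv_iff_field_differentiable has_field_derivative_at_within by blast
      qed
    qed (use dB in auto)
    then have fz: "cmod (f z) \<le> B * r" using f(2) by (simp add: r_def)
    have "bloch_weight \<alpha> (alexander_op f) z = (1 - r\<^sup>2) powr \<alpha> * (cmod (f z) / r)"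
      using dC False by (simp add: bloch_weight_def Gf_def r_def norm_divide)
    also have "\<dots> \<le> (1 - r\<^sup>2) powr \<alpha> * B"
      using fz r qp by (intro mult_left_mono) (auto simp: field_simps)
    also have "\<dots> = N" using qp by (simp add: B_def)
    finally show ?thesis by (simp add: N_def)
  qed
qed

lemma norm_nonneg:
  assumes "f \<in> bloch_space \<alpha>"
  shows "0 \<le> bloch_norm \<alpha> f"
proof -
  have "0 \<le> bloch_weight \<alpha> f 0" by (simp add: bloch_weight_def)
  also have "\<dots> \<le> bloch_norm \<alpha> f" by (rule weight_le_norm[OF assms]) simp
  finally show ?thesis .
qed

lemma C0_in:
  assumes f: "f \<in> bloch_space0 \<alpha>" and a: "\<alpha> > 0"
  shows "alexander_op f \<in> bloch_space0 \<alpha>"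
    and "bloch_norm \<alpha> (alexander_op f) \<le> bloch_norm \<alpha> f"
proof -
  have f1: "f \<in> bloch_space \<alpha>" "f 0 = 0" using f by (auto simp: bloch_space0_def)
  have hol: "f holomorphic_on ball 0 1" using f1 unfolding bloch_space_def by auto
  have h: "alexander_op f holomorphic_on ball 0 1"
    unfolding holomorphic_on_open[OF open_ball]
    using C0_deriv[OF hol f1(2)] by blast
  have bd: "bdd_above (bloch_weight \<alpha> (alexander_op f) ` ball 0 1)"
    using bound[OF f1 _ a] by (intro bdd_aboveI2) auto
  show "alexander_op f \<in> bloch_space0 \<alpha>"
    using h bd by (simp add: bloch_space0_def bloch_space_def alexander_op_def)
  show "bloch_norm \<alpha> (alexander_op f) \<le> bloch_norm \<alpha> f"
    unfolding bloch_norm_def[of _ "alexander_op f"]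
    using bound[OF f1 _ a] by (intro cSUP_least) auto
qed

theorem theorem2p5:
  fixes \<alpha> :: real
  assumes "\<alpha> > 0"
  shows "(\<forall>f\<in>bloch_space0 \<alpha>. alexander_op f \<in> bloch_space0 \<alpha>)
    \<and> (\<forall>f\<in>bloch_space0 \<alpha>. \<forall>g\<in>bloch_space0 \<alpha>. \<forall>a b :: complex. \<forall>z\<in>ball 0 1.
          alexander_op (\<lambda>w. a * f w + b * g w) z = a * alexander_op f z + b * alexander_op g z)
    \<and> (\<exists>M. \<forall>f\<in>bloch_space0 \<alpha>. bloch_norm \<alpha> (alexander_op f) \<le> M * bloch_norm \<alpha> f)
    \<and> (SUP f\<in>{f\<in>bloch_space0 \<alpha>. bloch_norm \<alpha> f \<noteq> 0}.
          bloch_norm \<alpha> (alexander_op f) / bloch_norm \<alpha> f) = 1"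
proof -
  have c1: "\<forall>f\<in>bloch_space0 \<alpha>. alexander_op f \<in> bloch_space0 \<alpha>"
    using C0_in(1)[OF _ assms] by blast
  have c3: "\<forall>f\<in>bloch_space0 \<alpha>. bloch_norm \<alpha> (alexander_op f) \<le> 1 * bloch_norm \<alpha> f"
    using C0_in(2)[OF _ assms] by simp
  have c2: "alexander_op (\<lambda>w. a * f w + b * g w) z = a * alexander_op f z + b * alexander_op g z"
    if f: "f \<in> bloch_space0 \<alpha>" and g: "g \<in> bloch_space0 \<alpha>" and z: "z \<in> ball 0 1" for f g a b z
  proof (cases "z = 0")
    case True then show ?thesis by (simp add: alexander_op_def)
  next
    case False
    have hf: "f holomorphic_on ball 0 1" "f 0 = 0" using f by (auto simp: bloch_space0_def bloch_space_def)
    have hg: "g holomorphic_on ball 0 1" "g 0 = 0" using g by (auto simp: bloch_space0_def bloch_space_def)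
    have seg: "closed_segment 0 z \<subseteq> ball 0 1" using z by (intro closed_segment_subset) (auto simp: convex_ball)
    have if1: "Gf f contour_integrable_on linepath 0 z"
      by (rule contour_integrable_continuous_linepath)
         (meson G_hol[OF hf] holomorphic_on_imp_continuous_on continuous_on_subset seg)
    have ig1: "Gf g contour_integrable_on linepath 0 z"
      by (rule contour_integrable_continuous_linepath)
         (meson G_hol[OF hg] holomorphic_on_imp_continuous_on continuous_on_subset seg)
    have "alexander_op (\<lambda>w. a * f w + b * g w) z
        = contour_integral (linepath 0 z) (\<lambda>w. a * Gf f w + b * Gf g w)"
      unfolding alexander_op_def
      by (rule contour_integral_spike_finite_simple_path[of "{0}"])
         (use False in \<open>auto simp: Gf_def simple_path_linepath add_divide_distrib\<close>)
    also have "\<dots> = a * contour_integral (linepath 0 z) (Gf f) + b * contour_integral (linepath 0 z) (Gf g)"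
      using if1 ig1 by (simp add: contour_integral_add contour_integral_lmul contour_integrable_lmul)
    also have "\<dots> = a * alexander_op f z + b * alexander_op g z"
      using C0_eq[OF hf] C0_eq[OF hg] by simp
    finally show ?thesis .
  qed
  define S where "S = {f\<in>bloch_space0 \<alpha>. bloch_norm \<alpha> f \<noteq> 0}"
  define \<phi> where "\<phi> = (\<lambda>f. bloch_norm \<alpha> (alexander_op f) / bloch_norm \<alpha> f)"
  have le1: "\<phi> f \<le> 1" if "f \<in> S" for f
  proof -
    have "f \<in> bloch_space \<alpha>" using that by (auto simp: S_def bloch_space0_def)
    then have "0 < bloch_norm \<alpha> f" using norm_nonneg that S_def
      by (metis (mono_tags, lifting) less_eq_real_def mem_Collect_eq)
    then show ?thesis using C0_in(2)[OF _ assms, of f] that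
      by (auto simp: \<phi>_def S_def)
  qed
  define ii where "ii = (\<lambda>w::complex. w)"
  have dii: "deriv ii w = 1" for w by (simp add: ii_def)
  have wii: "bloch_weight \<alpha> ii w \<le> 1" if "w \<in> ball 0 1" for w
  proof -
    have "cmod w < 1" using that by simp
    then have "0 \<le> 1 - (cmod w)\<^sup>2" by (simp add: abs_square_le_1)
    then have "(1 - (cmod w)\<^sup>2) powr \<alpha> \<le> 1 powr \<alpha>" using assms by (intro powr_mono2) auto
    then show ?thesis by (simp add: bloch_weight_def dii)
  qed
  have ii0: "ii \<in> bloch_space0 \<alpha>"
    unfolding bloch_space0_def bloch_space_def using wii
    by (auto simp: ii_def intro!: bdd_aboveI2)
  have n1: "1 \<le> bloch_norm \<alpha> ii"
  proof -
    have "bloch_weight \<alpha> ii 0 = 1" by (simp add: bloch_weight_def dii)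
    moreover have "bloch_weight \<alpha> ii 0 \<le> bloch_norm \<alpha> ii"
      using ii0 by (intro weight_le_norm) (auto simp: bloch_space0_def)
    ultimately show ?thesis by simp
  qed
  have hii: "ii holomorphic_on ball 0 1" "ii 0 = 0" using ii0 by (auto simp: bloch_space0_def bloch_space_def)
  have wC: "bloch_weight \<alpha> (alexander_op ii) w = bloch_weight \<alpha> ii w" if "w \<in> ball 0 1" for w
  proof -
    have "deriv (alexander_op ii) w = Gf ii w"
      using C0_deriv[OF hii that] DERIV_imp_deriv by blast
    also have "\<dots> = 1" by (simp add: Gf_def dii ii_def)
    finally show ?thesis by (simp add: bloch_weight_def dii)
  qed
  have "bloch_norm \<alpha> (alexander_op ii) = bloch_norm \<alpha> ii"
    unfolding bloch_norm_def using wC by (intro SUP_cong) auto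
  then have phii: "\<phi> ii = 1" using n1 by (simp add: \<phi>_def)
  have iiS: "ii \<in> S" using ii0 n1 by (auto simp: S_def)
  have "(SUP f\<in>S. \<phi> f) = 1"
  proof (rule antisym)
    show "(SUP f\<in>S. \<phi> f) \<le> 1" using iiS le1 by (intro cSUP_least) auto
    have "\<phi> ii \<le> (SUP f\<in>S. \<phi> f)"
      using iiS le1 by (intro cSUP_upper bdd_aboveI2) auto
    then show "1 \<le> (SUP f\<in>S. \<phi> f)" using phii by simp
  qed
  then show ?thesis using c1 c2 c3 unfolding S_def \<phi>_def by blast
qed

end
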